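(* Let $\xi$ be a complete holomorphic vector field without zeros on a Stein manifold $X$, and let $\Phi_t$, $t\in\mathbb{C}$, be the time-$t$ maps of its flow. Then for no $t\in\mathbb{C}$ is $\Phi_t$ robustly non-expelling in $\{\Phi_s:s\in\mathbb{C}\}\subset{\operatorname{Aut}}\,X$; equivalently, $\Phi_t$ is expelling for all $t$ in a dense $G_\delta$ subset of $\mathbb{C}$.
   Context: Complete: flow defined for all complex time. An automorphism is expelling if the set of points with relatively compact forward orbit has empty interior. For a submonoid $A$ of ${\operatorname{Aut}}\,X$ (compact-open topology), $f\in A$ is robustly non-expelling in $A$ if there are a neighbourhood $W$ of $f$ in $A$, a nonempty open $V\subset X$ and a compact $K\subset X$ with $g^j(V)\subset K$ for all $g\in W$, $j\geq0$. *)

theory Defs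
  imports "HOL-Analysis.Analysis"
begin

definition hol_Cn :: "(complex^'n) set \<Rightarrow> (complex^'n \<Rightarrow> complex^'m) \<Rightarrow> bool" where
  "hol_Cn S f \<longleftrightarrow> open S \<and>
     (\<forall>x\<in>S. \<exists>L. (f has_derivative L) (at x) \<and> (\<forall>v. L (\<i> *s v) = \<i> *s L v))"

definition hol_Cn_scalar :: "(complex^'n) set \<Rightarrow> (complex^'n \<Rightarrow> complex) \<Rightarrow> bool" where
  "hol_Cn_scalar S f \<longleftrightarrow> open S \<and>
     (\<forall>x\<in>S. \<exists>L. (f has_derivative L) (at x) \<and> (\<forall>v. L (\<i> *s v) = \<i> * L v))"

definition hol_CxCn :: "(complex \<times> (complex^'n)) set \<Rightarrow> (complex \<times> (complex^'n) \<Rightarrow> complex^'m) \<Rightarrow> bool" where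
  "hol_CxCn S f \<longleftrightarrow> open S \<and>
     (\<forall>x\<in>S. \<exists>L. (f has_derivative L) (at x) \<and>
        (\<forall>t v. L (\<i> * t, \<i> *s v) = \<i> *s L (t, v)))"

definition complex_atlas :: "('a::topological_space set \<times> ('a \<Rightarrow> complex^'n)) set \<Rightarrow> bool" where
  "complex_atlas A \<longleftrightarrow>
     (\<forall>(U,\<phi>)\<in>A. open U \<and> open (\<phi> ` U) \<and> inj_on \<phi> U \<and> continuous_on U \<phi> \<and>
                  continuous_on (\<phi> ` U) (inv_into U \<phi>)) \<and>
     \<Union>(fst ` A) = UNIV \<and>
     (\<forall>(U,\<phi>)\<in>A. \<forall>(V,\<psi>)\<in>A. hol_Cn (\<phi> ` (U \<inter> V)) (\<psi> \<circ> inv_into U \<phi>))"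

definition hol_fun :: "('a::topological_space set \<times> ('a \<Rightarrow> complex^'n)) set \<Rightarrow> ('a \<Rightarrow> complex) \<Rightarrow> bool" where
  "hol_fun A f \<longleftrightarrow> (\<forall>(U,\<phi>)\<in>A. hol_Cn_scalar (\<phi> ` U) (f \<circ> inv_into U \<phi>))"

definition hol_hull :: "('a::topological_space set \<times> ('a \<Rightarrow> complex^'n)) set \<Rightarrow> 'a set \<Rightarrow> 'a set" where
  "hol_hull A K = {x. \<forall>f. hol_fun A f \<longrightarrow> norm (f x) \<le> (SUP y\<in>K. norm (f y))}"

definition stein_manifold ::
  "('a::{t2_space,second_countable_topology} set \<times> ('a \<Rightarrow> complex^'n)) set \<Rightarrow> bool" where
  "stein_manifold A \<longleftrightarrow> complex_atlas A \<and>
     (\<forall>x y. x \<noteq> y \<longrightarrow> (\<exists>f. hol_fun A f \<and> f x \<noteq> f y)) \<and>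
     (\<forall>K. compact K \<longrightarrow> compact (hol_hull A K))"

section \<open>Complete holomorphic vector fields, represented by their flows\<close>

definition complete_hol_flow ::
  "('a::topological_space set \<times> ('a \<Rightarrow> complex^'n)) set \<Rightarrow> (complex \<Rightarrow> 'a \<Rightarrow> 'a) \<Rightarrow> bool" where
  "complete_hol_flow A \<Phi> \<longleftrightarrow>
     \<Phi> 0 = id \<and> (\<forall>s t. \<Phi> (s + t) = \<Phi> s \<circ> \<Phi> t) \<and>
     continuous_on UNIV (\<lambda>(t, x). \<Phi> t x) \<and>
     (\<forall>(U,\<phi>)\<in>A. \<forall>(V,\<psi>)\<in>A.
        hol_CxCn {(t, z). z \<in> \<phi> ` U \<and> \<Phi> t (inv_into U \<phi> z) \<in> V}
                 (\<lambda>(t, z). \<psi> (\<Phi> t (inv_into U \<phi> z))))"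

text \<open>The generating vector field xi has no zeros: at every point p the velocity
xi(p) = d/dt|_{t=0} Phi t p, read in any chart around p, is nonzero.\<close>

definition flow_without_zeros ::
  "('a::topological_space set \<times> ('a \<Rightarrow> complex^'n)) set \<Rightarrow> (complex \<Rightarrow> 'a \<Rightarrow> 'a) \<Rightarrow> bool" where
  "flow_without_zeros A \<Phi> \<longleftrightarrow>
     (\<forall>p. \<forall>(U,\<phi>)\<in>A. p \<in> U \<longrightarrow>
        \<not> ((\<lambda>t. \<phi> (\<Phi> t p)) has_derivative (\<lambda>_. 0)) (at 0))"

definition expelling :: "('a::topological_space \<Rightarrow> 'a) \<Rightarrow> bool" where
  "expelling f \<longleftrightarrow>
     interior {x. compact (closure (range (\<lambda>j::nat. (f ^^ j) x)))} = {}"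

text \<open>Basic neighbourhoods of f in the compact-open topology on a set M of maps:
finite intersections of subbasic sets {g in M. g ` K \<subseteq> U}, K compact, U open.\<close>

definition co_basic_nhd :: "('a::topological_space \<Rightarrow> 'a) set \<Rightarrow> ('a \<Rightarrow> 'a) \<Rightarrow> ('a \<Rightarrow> 'a) set \<Rightarrow> bool" where
  "co_basic_nhd M f W \<longleftrightarrow> (\<exists>P. finite P \<and>
      (\<forall>(K,U)\<in>P. compact K \<and> open U \<and> f ` K \<subseteq> U) \<and>
      W = {g\<in>M. \<forall>(K,U)\<in>P. g ` K \<subseteq> U})"

definition robustly_non_expelling :: "('a::topological_space \<Rightarrow> 'a) set \<Rightarrow> ('a \<Rightarrow> 'a) \<Rightarrow> bool" where
  "robustly_non_expelling M f \<longleftrightarrow> f \<in> M \<and>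
     (\<exists>W V K. co_basic_nhd M f W \<and> open V \<and> V \<noteq> {} \<and> compact K \<and>
        (\<forall>g\<in>W. \<forall>j::nat. (g ^^ j) ` V \<subseteq> K))"

definition dense_Gdelta :: "'b::topological_space set \<Rightarrow> bool" where
  "dense_Gdelta G \<longleftrightarrow> closure G = UNIV \<and>
     (\<exists>U::nat \<Rightarrow> 'b set. (\<forall>k. open (U k)) \<and> G = (\<Inter>k. U k))"

end

theory Submission
  imports Defs "HOL-Complex_Analysis.Complex_Analysis"
begin


lemma chart_props:
  assumes "complex_atlas A" "(U,\<phi>) \<in> A"
  shows "open U" "open (\<phi> ` U)" "inj_on \<phi> U" "continuous_on U \<phi>" "continuous_on (\<phi> ` U) (inv_into U \<phi>)"
proof -
  have "\<forall>(U,\<phi>)\<in>A. open U \<and> open (\<phi> ` U) \<and> inj_on \<phi> U \<and> continuous_on U \<phi> \<and>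
                  continuous_on (\<phi> ` U) (inv_into U \<phi>)"
    using assms(1) unfolding complex_atlas_def by (elim conjE)
  from bspec[OF this assms(2)] have "open U \<and> open (\<phi> ` U) \<and> inj_on \<phi> U \<and> continuous_on U \<phi> \<and>
                  continuous_on (\<phi> ` U) (inv_into U \<phi>)" by simp
  then show "open U" "open (\<phi> ` U)" "inj_on \<phi> U" "continuous_on U \<phi>" "continuous_on (\<phi> ` U) (inv_into U \<phi>)"
    by auto
qed

lemma chart_at:
  assumes "complex_atlas A"
  obtains U \<phi> where "(U,\<phi>) \<in> A" "x \<in> U"
proof -
  have "\<Union>(fst ` A) = UNIV" using assms unfolding complex_atlas_def by (elim conjE)
  then have "x \<in> \<Union>(fst ` A)" by simp
  then obtain c where "c \<in> A" "x \<in> fst c" by blast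
  then show ?thesis using that[of "fst c" "snd c"] by simp
qed

lemma hol_fun_chart:
  assumes "hol_fun A f" "(U,\<phi>) \<in> A"
  shows "hol_Cn_scalar (\<phi> ` U) (f \<circ> inv_into U \<phi>)"
proof -
  have "\<forall>(U,\<phi>)\<in>A. hol_Cn_scalar (\<phi> ` U) (f \<circ> inv_into U \<phi>)" using assms(1) unfolding hol_fun_def .
  from bspec[OF this assms(2)] show ?thesis by simp
qed

lemma flow_basic:
  assumes "complete_hol_flow A \<Phi>"
  shows "\<Phi> 0 = id" "\<Phi> (s + t) = \<Phi> s \<circ> \<Phi> t" "continuous_on UNIV (\<lambda>(t, x). \<Phi> t x)"
  using assms unfolding complete_hol_flow_def by blast+

lemma flow_chart:
  assumes "complete_hol_flow A \<Phi>" "(U,\<phi>) \<in> A"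
  shows "hol_CxCn {(t, z). z \<in> \<phi> ` U \<and> \<Phi> t (inv_into U \<phi> z) \<in> U}
                 (\<lambda>(t, z). \<phi> (\<Phi> t (inv_into U \<phi> z)))"
proof -
  have "\<forall>(U,\<phi>)\<in>A. \<forall>(V,\<psi>)\<in>A.
        hol_CxCn {(t, z). z \<in> \<phi> ` U \<and> \<Phi> t (inv_into U \<phi> z) \<in> V}
                 (\<lambda>(t, z). \<psi> (\<Phi> t (inv_into U \<phi> z)))"
    using assms(1) unfolding complete_hol_flow_def by (elim conjE)
  from bspec[OF this assms(2)] have "\<forall>(V,\<psi>)\<in>A.
        hol_CxCn {(t, z). z \<in> \<phi> ` U \<and> \<Phi> t (inv_into U \<phi> z) \<in> V}
                 (\<lambda>(t, z). \<psi> (\<Phi> t (inv_into U \<phi> z)))" by simp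
  from bspec[OF this assms(2)] show ?thesis by simp
qed

lemma flow_pow:
  assumes "complete_hol_flow A \<Phi>"
  shows "\<Phi> (of_nat j * s) = \<Phi> s ^^ j"
proof (induction j)
  case 0 then show ?case using assms by (simp add: complete_hol_flow_def)
next
  case (Suc j)
  have "\<Phi> (of_nat (Suc j) * s) = \<Phi> (s + of_nat j * s)" by (simp add: algebra_simps)
  also have "\<dots> = \<Phi> s \<circ> \<Phi> (of_nat j * s)" using assms by (simp add: complete_hol_flow_def)
  finally show ?case using Suc by simp
qed

lemma flow_cont_x:
  assumes "complete_hol_flow A \<Phi>"
  shows "continuous_on UNIV (\<Phi> w)"
proof -
  have c: "continuous_on UNIV (\<lambda>(t, x). \<Phi> t x)" using assms by (simp add: complete_hol_flow_def)
  have p: "continuous_on UNIV (\<lambda>x. (w, x))" by (intro continuous_on_Pair continuous_on_const continuous_on_id)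
  have "continuous_on UNIV ((\<lambda>(t, x). \<Phi> t x) \<circ> (\<lambda>x. (w, x)))"
    by (rule continuous_on_compose[OF p]) (rule continuous_on_subset[OF c], simp)
  then show ?thesis by (simp add: o_def)
qed

lemma flow_cont_t:
  assumes "complete_hol_flow A \<Phi>"
  shows "continuous_on UNIV (\<lambda>t. \<Phi> (c * t) x)"
proof -
  have c: "continuous_on UNIV (\<lambda>(t, x). \<Phi> t x)" using assms by (simp add: complete_hol_flow_def)
  have p: "continuous_on UNIV (\<lambda>t. (c * t, x))" by (intro continuous_on_Pair continuous_on_const continuous_on_id continuous_on_mult)
  have "continuous_on UNIV ((\<lambda>(t, x). \<Phi> t x) \<circ> (\<lambda>t. (c * t, x)))"
    by (rule continuous_on_compose[OF p]) (rule continuous_on_subset[OF c], simp)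
  then show ?thesis by (simp add: o_def)
qed

lemma hol_fun_cont:
  assumes "complex_atlas A" "hol_fun A f"
  shows "isCont f x"
proof -
  obtain U \<phi> where U: "(U,\<phi>) \<in> A" "x \<in> U" using chart_at[OF assms(1)] by blast
  note ch = chart_props[OF assms(1) U(1)]
  define g where "g = f \<circ> inv_into U \<phi>"
  have hg: "hol_Cn_scalar (\<phi> ` U) g" using hol_fun_chart[OF assms(2) U(1)] unfolding g_def .
  have "continuous_on (\<phi> ` U) g"
  proof (rule continuous_at_imp_continuous_on, intro ballI)
    fix z assume "z \<in> \<phi> ` U"
    then obtain L where "(g has_derivative L) (at z)" using hg unfolding hol_Cn_scalar_def by blast
    then show "isCont g z" by (rule has_derivative_continuous)
  qed
  then have "continuous_on U (g \<circ> \<phi>)" using ch(4) by (intro continuous_on_compose) auto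
  moreover have "\<And>y. y \<in> U \<Longrightarrow> (g \<circ> \<phi>) y = f y" using ch(3) by (simp add: g_def)
  ultimately have "continuous_on U f" using continuous_on_cong by force
  then show ?thesis using ch(1) U(2) continuous_on_eq_continuous_at by blast
qed

lemma clinear_deriv:
  fixes M :: "complex \<Rightarrow> complex"
  assumes "linear M" "\<And>h. M (\<i> * h) = \<i> * M h"
  shows "M = (\<lambda>h. M 1 * h)"
proof
  fix h :: complex
  have h: "h = of_real (Re h) *\<^sub>R 1 + of_real (Im h) *\<^sub>R \<i>"
    by (simp add: complex_eq_iff)
  have "M h = Re h *\<^sub>R M 1 + Im h *\<^sub>R M \<i>"
    by (subst h) (simp add: linear_add[OF assms(1)] linear_scale[OF assms(1)])
  also have "M \<i> = \<i> * M 1" using assms(2)[of 1] by simp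
  finally show "M h = M 1 * h"
    by (subst (2) h) (simp add: scaleR_conv_of_real algebra_simps)
qed

lemma hol_along:
  assumes "complex_atlas A" "complete_hol_flow A \<Phi>" "hol_fun A f"
  shows "\<exists>c. ((\<lambda>h. f (\<Phi> h p)) has_field_derivative c) (at 0)"
proof -
  obtain U \<phi> where U: "(U,\<phi>) \<in> A" "p \<in> U" using chart_at[OF assms(1)] by blast
  note ch = chart_props[OF assms(1) U(1)]
  have \<Phi>0: "\<Phi> 0 = id" using flow_basic[OF assms(2)] by simp
  define S where "S = {(t, z). z \<in> \<phi> ` U \<and> \<Phi> t (inv_into U \<phi> z) \<in> U}"
  define F where "F = (\<lambda>(t, z). \<phi> (\<Phi> t (inv_into U \<phi> z)))"
  have hF: "hol_CxCn S F" using flow_chart[OF assms(2) U(1)] unfolding S_def F_def .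
  have ip: "inv_into U \<phi> (\<phi> p) = p" using ch U by simp
  have S0: "(0, \<phi> p) \<in> S" using U ip \<Phi>0 by (simp add: S_def)
  obtain L where L: "(F has_derivative L) (at (0, \<phi> p))" "\<And>t v. L (\<i> * t, \<i> *s v) = \<i> *s L (t, v)"
    using hF S0 unfolding hol_Cn_def hol_CxCn_def by blast
  define g where "g = f \<circ> inv_into U \<phi>"
  have hg: "hol_Cn_scalar (\<phi> ` U) g" using hol_fun_chart[OF assms(3) U(1)] unfolding g_def .
  have F0: "F (0, \<phi> p) = \<phi> p" using ip \<Phi>0 by (simp add: F_def)
  obtain Lg where Lg: "(g has_derivative Lg) (at (\<phi> p))" "\<And>v. Lg (\<i> *s v) = \<i> * Lg v"
    using hg U unfolding hol_Cn_scalar_def by blast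
  have d1: "((\<lambda>h. (h, \<phi> p)) has_derivative (\<lambda>h. (h, 0))) (at (0::complex))"
    by (auto intro!: derivative_eq_intros)
  have d2: "((\<lambda>h. F (h, \<phi> p)) has_derivative (\<lambda>h. L (h, 0))) (at 0)"
    using has_derivative_compose[OF d1, of F L] L(1) by simp
  have d3: "((\<lambda>h. g (F (h, \<phi> p))) has_derivative (\<lambda>h. Lg (L (h, 0)))) (at 0)"
    using has_derivative_compose[OF d2, of g Lg] Lg(1) F0 by simp
  define T where "T = (\<lambda>h. (h, \<phi> p)) -` S"
  have "open S" using hF by (simp add: hol_CxCn_def)
  then have oT: "open T" unfolding T_def
    by (intro continuous_open_vimage) (auto intro!: continuous_intros)
  have T0: "0 \<in> T" using S0 by (simp add: T_def)
  have eq: "g (F (h, \<phi> p)) = f (\<Phi> h p)" if "h \<in> T" for h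
    using that ip ch by (simp add: T_def S_def F_def g_def)
  have d4: "((\<lambda>h. f (\<Phi> h p)) has_derivative (\<lambda>h. Lg (L (h, 0)))) (at 0)"
    by (rule has_derivative_transform_within_open[OF d3 oT T0 eq])
  have lin: "linear (\<lambda>h. Lg (L (h, 0)))"
    using d4 has_derivative_linear by blast
  have "Lg (L (\<i> * h, 0)) = \<i> * Lg (L (h, 0))" for h
    using L(2)[of h 0] Lg(2) by simp
  then have "(\<lambda>h. Lg (L (h, 0))) = (\<lambda>h. Lg (L (1, 0)) * h)"
    using clinear_deriv[OF lin] by blast
  then show ?thesis using d4 unfolding has_field_derivative_def
    by (metis mult.commute)
qed

lemma hol_entire:
  assumes "complex_atlas A" "complete_hol_flow A \<Phi>" "hol_fun A f"
  shows "(\<lambda>w. f (\<Phi> w y)) holomorphic_on UNIV"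
proof -
  have "(\<lambda>w. f (\<Phi> w y)) field_differentiable (at w0)" for w0
  proof -
    obtain c where c: "((\<lambda>h. f (\<Phi> h (\<Phi> w0 y))) has_field_derivative c) (at 0)"
      using hol_along[OF assms] by blast
    have sh: "((\<lambda>w. w - w0) has_field_derivative 1) (at w0)"
      by (rule derivative_eq_intros refl)+ simp
    have d: "((\<lambda>w. f (\<Phi> (w - w0) (\<Phi> w0 y))) has_field_derivative c * 1) (at w0)"
      using DERIV_chain2[of "\<lambda>h. f (\<Phi> h (\<Phi> w0 y))" c "\<lambda>w. w - w0" w0 1] c sh by simp
    have e: "\<Phi> (w - w0) (\<Phi> w0 y) = \<Phi> w y" for w
    proof -
      have "\<Phi> ((w - w0) + w0) = \<Phi> (w - w0) \<circ> \<Phi> w0"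
        using flow_basic(2)[OF assms(2)] .
      then show ?thesis by simp
    qed
    have "(\<lambda>w. f (\<Phi> (w - w0) (\<Phi> w0 y))) = (\<lambda>w. f (\<Phi> w y))"
      using e by presburger
    then show ?thesis using d unfolding field_differentiable_def by metis
  qed
  then show ?thesis unfolding holomorphic_on_def using field_differentiable_at_within by blast
qed

lemma orbit_fixed:
  assumes st: "stein_manifold A" and fl: "complete_hol_flow A \<Phi>"
    and K: "compact K" and orb: "\<And>w. \<Phi> w y \<in> K"
  shows "\<Phi> w y = y"
proof (rule ccontr)
  assume ne: "\<Phi> w y \<noteq> y"
  have at: "complex_atlas A" using st by (simp add: stein_manifold_def)
  have "\<forall>x y. x \<noteq> y \<longrightarrow> (\<exists>f. hol_fun A f \<and> f x \<noteq> f y)" using st unfolding stein_manifold_def by (elim conjE)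
  then obtain f where f: "hol_fun A f" "f (\<Phi> w y) \<noteq> f y" using ne by blast
  have hol: "(\<lambda>u. f (\<Phi> u y)) holomorphic_on UNIV" by (rule hol_entire[OF at fl f(1)])
  have "continuous_on K f" using hol_fun_cont[OF at f(1)] by (simp add: continuous_at_imp_continuous_on)
  then have "compact (f ` K)" using K by (rule compact_continuous_image)
  then have "bounded (f ` K)" by (rule compact_imp_bounded)
  moreover have "range (\<lambda>u. f (\<Phi> u y)) \<subseteq> f ` K" using orb by auto
  ultimately have "bounded (range (\<lambda>u. f (\<Phi> u y)))" by (rule bounded_subset)
  then have "(\<lambda>u. f (\<Phi> u y)) constant_on UNIV" using Liouville_theorem[OF hol] by blast
  then have "f (\<Phi> w y) = f (\<Phi> 0 y)" unfolding constant_on_def by (metis UNIV_I)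
  also have "\<dots> = f y" using flow_basic(1)[OF fl] by simp
  finally show False using f(2) by simp
qed

lemma core:
  assumes st: "stein_manifold A" and fl: "complete_hol_flow A \<Phi>" and nz: "flow_without_zeros A \<Phi>"
    and Os: "open Os" "t \<in> Os" and K: "compact K"
    and inK: "\<And>s j. s \<in> Os \<Longrightarrow> (\<Phi> s ^^ j) x \<in> K"
  shows False
proof -
  have at: "complex_atlas A" using st by (simp add: stein_manifold_def)
  define a where "a = (\<lambda>k. (\<Phi> t ^^ k) x)"
  have aK: "\<forall>k. a k \<in> K" using inK Os(2) by (simp add: a_def)
  have "seq_compact K" using K by (rule compact_imp_seq_compact)
  then obtain y r where y: "y \<in> K" "strict_mono r" "(a \<circ> r) \<longlonglongrightarrow> y"
    using aK by (rule seq_compactE)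
  have cK: "closed K" using K by (rule compact_imp_closed)
  have orb: "\<Phi> w y \<in> K" for w
  proof -
    have "(\<lambda>k. t + w * inverse (of_nat k)) \<longlonglongrightarrow> t + w * 0"
      by (intro tendsto_intros lim_inverse_n)
    then have "(\<lambda>k. t + w * inverse (of_nat k)) \<longlonglongrightarrow> t" by simp
    then have ev1: "eventually (\<lambda>k. t + w * inverse (of_nat k) \<in> Os) sequentially"
      using Os by (rule topological_tendstoD)
    have ev0: "eventually (\<lambda>k. \<Phi> w (a k) \<in> K) sequentially"
      using ev1 eventually_gt_at_top[of 0]
    proof eventually_elim
      case (elim k)
      have "\<Phi> w (a k) = \<Phi> (w + of_nat k * t) x"
        unfolding a_def flow_pow[OF fl, symmetric] flow_basic(2)[OF fl] by simp
      also have "w + of_nat k * t = of_nat k * (t + w * inverse (of_nat k))"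
        using elim(2) by (simp add: field_simps)
      also have "\<Phi> \<dots> x = (\<Phi> (t + w * inverse (of_nat k)) ^^ k) x"
        unfolding flow_pow[OF fl] ..
      finally show ?case using inK elim(1) by simp
    qed
    have ev2: "eventually (\<lambda>k. \<Phi> w ((a \<circ> r) k) \<in> K) sequentially"
      using eventually_compose_filterlim[OF ev0 filterlim_subseq[OF y(2)]] by (simp add: o_def)
    have "isCont (\<Phi> w) y"
      using flow_cont_x[OF fl, of w] by (simp add: continuous_on_eq_continuous_at)
    then have "(\<lambda>k. \<Phi> w ((a \<circ> r) k)) \<longlonglongrightarrow> \<Phi> w y"
      using y(3) by (rule isCont_tendsto_compose)
    then show ?thesis using Lim_in_closed_set[OF cK ev2] by simp
  qed
  have fixy: "\<Phi> w y = y" for w by (rule orbit_fixed[OF st fl K orb])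
  obtain U \<phi> where U: "(U,\<phi>) \<in> A" "y \<in> U" using chart_at[OF at] by blast
  have "\<forall>p. \<forall>(U,\<phi>)\<in>A. p \<in> U \<longrightarrow>
        \<not> ((\<lambda>t. \<phi> (\<Phi> t p)) has_derivative (\<lambda>_. 0)) (at 0)" using nz unfolding flow_without_zeros_def .
  then have "\<forall>(U,\<phi>)\<in>A. y \<in> U \<longrightarrow> \<not> ((\<lambda>t. \<phi> (\<Phi> t y)) has_derivative (\<lambda>_. 0)) (at 0)" by blast
  from bspec[OF this U(1)] U(2) have "\<not> ((\<lambda>t. \<phi> (\<Phi> t y)) has_derivative (\<lambda>_. 0)) (at 0)" by simp
  moreover have "((\<lambda>t. \<phi> (\<Phi> t y)) has_derivative (\<lambda>_. 0)) (at 0)"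
    unfolding fixy by (rule has_derivative_const)
  ultimately show False by blast
qed


lemma part1:
  assumes st: "stein_manifold A" and fl: "complete_hol_flow A \<Phi>" and nz: "flow_without_zeros A \<Phi>"
  shows "\<not> robustly_non_expelling (range \<Phi>) (\<Phi> t)"
proof
  assume "robustly_non_expelling (range \<Phi>) (\<Phi> t)"
  then obtain W V K where W: "co_basic_nhd (range \<Phi>) (\<Phi> t) W" and V: "open V" "V \<noteq> {}"
    and K: "compact K" and inW: "\<forall>g\<in>W. \<forall>j::nat. (g ^^ j) ` V \<subseteq> K"
    unfolding robustly_non_expelling_def by blast
  from W obtain P where P: "finite P" "\<forall>(K,U)\<in>P. compact K \<and> open U \<and> \<Phi> t ` K \<subseteq> U"
    and Weq: "W = {g\<in>range \<Phi>. \<forall>(K,U)\<in>P. g ` K \<subseteq> U}"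
    unfolding co_basic_nhd_def by blast
  obtain x where x: "x \<in> V" using V by blast
  have c: "continuous_on UNIV (\<lambda>(t, x). \<Phi> t x)" by (rule flow_basic(3)[OF fl])
  have "\<forall>p\<in>P. \<exists>X. t \<in> X \<and> open X \<and> (\<forall>s\<in>X. \<Phi> s ` fst p \<subseteq> snd p)"
  proof
    fix p assume pP: "p \<in> P"
    obtain K' U where p: "p = (K', U)" by (cases p) auto
    from bspec[OF P(2) pP] have "compact K' \<and> open U \<and> \<Phi> t ` K' \<subseteq> U" unfolding p by simp
    then have KU: "compact K'" "open U" "\<Phi> t ` K' \<subseteq> U" by auto
    define Wt where "Wt = (\<lambda>(s,z). \<Phi> s z) -` U"
    have oW: "open Wt" unfolding Wt_def by (rule open_vimage[OF KU(2) c])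
    have sW: "{t} \<times> K' \<subseteq> Wt" using KU(3) by (auto simp: Wt_def)
    have "\<exists>X0. t \<in> X0 \<and> open X0 \<and> X0 \<times> K' \<subseteq> Wt"
      by (rule Elementary_Topology.tube_lemma[OF KU(1) oW sW])
    then obtain X0 where X0: "t \<in> X0" "open X0" "X0 \<times> K' \<subseteq> Wt" by blast
    have "\<forall>s\<in>X0. \<Phi> s ` K' \<subseteq> U" using X0(3) by (auto simp: Wt_def)
    then show "\<exists>X. t \<in> X \<and> open X \<and> (\<forall>s\<in>X. \<Phi> s ` fst p \<subseteq> snd p)"
      using X0 p by auto
  qed
  from bchoice[OF this] obtain X where X: "\<forall>p\<in>P. t \<in> X p \<and> open (X p) \<and> (\<forall>s\<in>X p. \<Phi> s ` fst p \<subseteq> snd p)"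
    by blast
  define Os where "Os = (\<Inter>p\<in>P. X p)"
  have oO: "open Os" unfolding Os_def by (rule open_INT[OF P(1)]) (use X in blast)
  have tO: "t \<in> Os" unfolding Os_def using X by blast
  have "(\<Phi> s ^^ j) x \<in> K" if "s \<in> Os" for s j
  proof -
    have "\<forall>p\<in>P. \<Phi> s ` fst p \<subseteq> snd p" using that X unfolding Os_def by blast
    then have "\<forall>(K,U)\<in>P. \<Phi> s ` K \<subseteq> U" by (simp add: split_beta)
    then have "\<Phi> s \<in> W" unfolding Weq by blast
    then show ?thesis using inW x by blast
  qed
  then show False using core[OF st fl nz oO tO K] by blast
qed

lemma loc_compact:
  fixes A :: "('a::topological_space set \<times> ('a \<Rightarrow> complex^'n)) set" and q :: 'a
  assumes at: "complex_atlas A"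
  shows "\<exists>U C. open U \<and> q \<in> U \<and> compact C \<and> U \<subseteq> C"
proof -
  obtain U \<phi> where U: "(U,\<phi>) \<in> A" "q \<in> U" using chart_at[OF at] by blast
  note ch = chart_props[OF at U(1)]
  have "\<phi> q \<in> \<phi> ` U" using U(2) by simp
  from bspec[OF open_contains_cball[THEN iffD1, OF ch(2)] this]
  obtain e where e: "e > 0" "cball (\<phi> q) e \<subseteq> \<phi> ` U" by blast
  define C where "C = inv_into U \<phi> ` cball (\<phi> q) e"
  have cC: "compact C" unfolding C_def
    by (rule compact_continuous_image[OF continuous_on_subset[OF ch(5) e(2)] compact_cball])
  define O' where "O' = \<phi> -` ball (\<phi> q) e \<inter> U"
  have oO: "open O'" using continuous_on_open_vimage[OF ch(1)] ch(4) unfolding O'_def by blast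
  have qO: "q \<in> O'" using U(2) e(1) by (simp add: O'_def)
  have "O' \<subseteq> C"
  proof
    fix y assume "y \<in> O'"
    then have y: "y \<in> U" "\<phi> y \<in> ball (\<phi> q) e" by (auto simp: O'_def)
    then have "y = inv_into U \<phi> (\<phi> y)" using ch(3) by simp
    moreover have "\<phi> y \<in> cball (\<phi> q) e" using y(2) by simp
    ultimately show "y \<in> C" unfolding C_def by blast
  qed
  then show ?thesis using oO qO cC by blast
qed

lemma part2:
  assumes st: "stein_manifold A" and fl: "complete_hol_flow A \<Phi>" and nz: "flow_without_zeros A \<Phi>"
  shows "\<exists>G::complex set. dense_Gdelta G \<and> (\<forall>t\<in>G. expelling (\<Phi> t))"
proof -
  have at: "complex_atlas A" using st by (simp add: stein_manifold_def)
  obtain B :: "'a set set" where B: "countable B" "topological_basis B" using ex_countable_basis by blast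
  define Bk where "Bk = {b\<in>B. compact (closure b)}"
  have Bko: "\<And>b. b \<in> Bk \<Longrightarrow> open b" using B(2) topological_basis_open unfolding Bk_def by blast
  have cover: "\<exists>b\<in>Bk. q \<in> b" for q
  proof -
    obtain U C where UC: "open U" "q \<in> U" "compact C" "U \<subseteq> C" using loc_compact[OF at] by blast
    obtain b where b: "b \<in> B" "q \<in> b" "b \<subseteq> U" using topological_basisE[OF B(2) UC(1) UC(2)] by blast
    have "closure b \<subseteq> C" using b(3) UC(4) compact_imp_closed[OF UC(3)] closure_minimal by blast
    then have "closure b = C \<inter> closure b" by blast
    then have "compact (closure b)" using compact_Int_closed[OF UC(3), of "closure b"] by simp
    then show ?thesis using b unfolding Bk_def by blast
  qed
  define KK where "KK = (\<lambda>F. \<Union>(closure ` F)) ` {F. finite F \<and> F \<subseteq> Bk}"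
  have "Bk \<subseteq> B" unfolding Bk_def by blast
  then have "countable Bk" using B(1) by (rule countable_subset)
  then have "countable {F. finite F \<and> F \<subseteq> Bk}" by (rule countable_Collect_finite_subset)
  then have cKK: "countable KK" unfolding KK_def by (rule countable_image)
  have KKc: "compact K" if "K \<in> KK" for K
  proof -
    from that obtain F where F: "finite F" "F \<subseteq> Bk" "K = \<Union>(closure ` F)" unfolding KK_def by auto
    show ?thesis unfolding F(3) using F(1,2) unfolding Bk_def by (intro compact_Union) auto
  qed
  obtain D :: "'a set" where D: "countable D" "\<And>X. open X \<Longrightarrow> X \<noteq> {} \<Longrightarrow> \<exists>d\<in>D. d \<in> X"
    using countable_dense_setE by blast
  have "D \<noteq> {}" using D(2)[of UNIV] by blast
  moreover have "{} \<in> KK" unfolding KK_def by (rule image_eqI[of _ _ "{}"]) auto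
  ultimately have Ine: "D \<times> KK \<noteq> {}" by blast
  define I where "I = D \<times> KK"
  have cI: "countable I" unfolding I_def using D(1) cKK by simp
  have Ine': "I \<noteq> {}" using Ine unfolding I_def .
  define E where "E = (\<lambda>i. {t. \<forall>j. (\<Phi> t ^^ j) (fst i) \<in> snd i})"
  have closedE: "closed (E i)" if iI: "i \<in> I" for i
  proof -
    from iI obtain d K where i: "i = (d, K)" "K \<in> KK" unfolding I_def by blast
    have cK: "closed K" using KKc[OF i(2)] by (rule compact_imp_closed)
    have "E i = (\<Inter>j. (\<lambda>t. \<Phi> (of_nat j * t) d) -` K)"
      unfolding i E_def flow_pow[OF fl] by (simp add: set_eq_iff)
    moreover have "closed ((\<lambda>t. \<Phi> (of_nat j * t) d) -` K)" for j
    proof (rule continuous_closed_vimage[OF cK])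
      fix t show "continuous (at t) (\<lambda>t. \<Phi> (of_nat j * t) d)"
        using flow_cont_t[OF fl, of "of_nat j" d] by (simp add: continuous_on_eq_continuous_at)
    qed
    ultimately show ?thesis by (simp add: closed_INT)
  qed
  have intE: "interior (E i) = {}" if iI: "i \<in> I" for i
  proof (rule ccontr)
    assume "interior (E i) \<noteq> {}"
    then obtain t where t: "t \<in> interior (E i)" by blast
    from iI obtain d K where i: "i = (d, K)" "K \<in> KK" unfolding I_def by blast
    have "(\<Phi> s ^^ j) d \<in> K" if "s \<in> interior (E i)" for s j
    proof -
      have "s \<in> E i" using interior_subset that by blast
      then show ?thesis unfolding i E_def by simp
    qed
    then show False using core[OF st fl nz open_interior t KKc[OF i(2)]] by blast
  qed
  define U where "U = (\<lambda>k. - E (from_nat_into I k))"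
  define G where "G = (\<Inter>k. U k)"
  have inI: "from_nat_into I k \<in> I" for k using from_nat_into[OF Ine'] .
  have oU: "open (U k)" for k unfolding U_def using closedE[OF inI] by (rule open_Compl)
  have "UNIV \<subseteq> closure (\<Inter>(range U))"
  proof (rule Baire)
    show "closed (UNIV::complex set)" by simp
    show "countable (range U)" by simp
    fix T assume "T \<in> range U"
    then obtain k where k: "T = U k" by blast
    have "openin (top_of_set UNIV) (U k)" using oU[of k] by simp
    moreover have "closure (U k) = UNIV" unfolding U_def closure_complement using intE[OF inI[of k]] by simp
    ultimately show "openin (top_of_set UNIV) T \<and> UNIV \<subseteq> closure T" unfolding k by simp
  qed
  then have "closure G = UNIV" unfolding G_def by blast
  moreover have "\<exists>U::nat \<Rightarrow> complex set. (\<forall>k. open (U k)) \<and> G = (\<Inter>k. U k)"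
    using oU unfolding G_def by blast
  ultimately have dG: "dense_Gdelta G" unfolding dense_Gdelta_def by blast
  have "expelling (\<Phi> t)" if tG: "t \<in> G" for t
  proof (rule ccontr)
    define N where "N = {x. compact (closure (range (\<lambda>j::nat. (\<Phi> t ^^ j) x)))}"
    assume "\<not> expelling (\<Phi> t)"
    then have "interior N \<noteq> {}" unfolding expelling_def N_def by simp
    then obtain d where d: "d \<in> D" "d \<in> interior N" using D(2)[OF open_interior] by blast
    define Q where "Q = closure (range (\<lambda>j::nat. (\<Phi> t ^^ j) d))"
    have cQ: "compact Q" using interior_subset d(2) unfolding Q_def N_def by blast
    have "Q \<subseteq> \<Union>Bk" using cover by blast
    then obtain F where F: "F \<subseteq> Bk" "finite F" "Q \<subseteq> \<Union>F" using compactE[OF cQ _ Bko] by blast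
    define K where "K = \<Union>(closure ` F)"
    have KK: "K \<in> KK" unfolding KK_def K_def using F by blast
    have FK: "\<Union>F \<subseteq> K" unfolding K_def by (auto intro: subsetD[OF closure_subset])
    have "(\<Phi> t ^^ j) d \<in> K" for j
    proof -
      have "(\<Phi> t ^^ j) d \<in> Q" unfolding Q_def by (rule subsetD[OF closure_subset]) simp
      then show ?thesis using F(3) FK by blast
    qed
    then have tE: "t \<in> E (d, K)" unfolding E_def by simp
    have "(d, K) \<in> range (from_nat_into I)" using d(1) KK range_from_nat_into[OF Ine' cI] unfolding I_def by blast
    then obtain k where "(d, K) = from_nat_into I k" by (rule rangeE)
    then have "t \<notin> U k" using tE unfolding U_def by (simp del: prod.collapse)
    then show False using tG unfolding G_def by blast
  qed
  then show ?thesis using dG by blast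
qed


theorem mainTheorem12:
  fixes A :: "('a::{t2_space,second_countable_topology} set \<times> ('a \<Rightarrow> complex^'n)) set"
    and \<Phi> :: "complex \<Rightarrow> 'a \<Rightarrow> 'a"
  assumes "stein_manifold A"
    and "complete_hol_flow A \<Phi>"
    and "flow_without_zeros A \<Phi>"
  shows "(\<forall>t. \<not> robustly_non_expelling (range \<Phi>) (\<Phi> t)) \<and>
         (\<exists>G::complex set. dense_Gdelta G \<and> (\<forall>t\<in>G. expelling (\<Phi> t)))"
proof
  show "\<forall>t. \<not> robustly_non_expelling (range \<Phi>) (\<Phi> t)"
    using part1[OF assms] by (intro allI)
  show "\<exists>G::complex set. dense_Gdelta G \<and> (\<forall>t\<in>G. expelling (\<Phi> t))"
    by (rule part2[OF assms])
qed

end
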